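(* There is no LCL problem on paths with mending radius between $\omega(1)$ and $o(n)$: if an LCL problem $\Pi$ on the family of all paths is $T$-mendable for some function $T$ with $T(n)=o(n)$, then $\Pi$ is $T'$-mendable for some constant function $T'$.
   Context: A locally verifiable problem $\Pi$ on a graph family $\mathcal{G}$ is given by a set $\Sigma$ of input labels, a set $\Gamma$ of output labels and a verifier $\psi$ with verification radius $r$: $\psi(G,\lambda,v)\in\{\text{happy},\text{unhappy}\}$ depends only on the radius-$r$ neighborhood of $v$ (structure, inputs and outputs, up to isomorphism); $\lambda:V\to\Gamma$ is a solution if $\psi$ is happy everywhere. $\Pi$ is an LCL problem if $\Sigma,\Gamma$ are finite and all graphs in $\mathcal{G}$ have maximum degree bounded by a constant. Partial labelings are maps $\lambda:V\to\Gamma\cup\{\bot\}$; the relaxed verifier $\psi^*$ is happy at $v$ if some node within distance $r$ of $v$ has label $\bot$, and otherwise $\psi^*(G,\lambda,v)=\psi(G,\lambda',v)$ for any $\lambda':V\to\Gamma$ agreeing with $\lambda$ on the radius-$r$ neighborhood of $v$; $\psi^*$ accepts $\lambda$ if happy everywhere. Given $\lambda$ accepted by $\psi^*$ and node $v$, a $t$-mend of $\lambda$ at $v$ is a partial labeling $\mu$ accepted by $\psi^*$ with $\mu(v)\neq\bot$, $\mu(u)=\bot\Rightarrow\lambda(u)=\bot$, and $\mu(u)\neq\lambda(u)\Rightarrow\mathrm{dist}(u,v)\le t$. A verifier is $T$-mendable if for every $G\in\mathcal{G}$ with $n$ nodes, every $\lambda$ accepted by $\psi^*$ and every node $v$, a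 $T(n)$-mend at $v$ exists; $\Pi$ is $T$-mendable if some radius-$r$ verifier for $\Pi$ (accepting exactly the solutions of $\Pi$) is $T$-mendable. *)

theory Defs
  imports Complex_Main "HOL-Library.Landau_Symbols"
begin

text \<open>
  A path with n nodes is represented
  by the vertex set {0..<n} with edges {i, i+1}.  Input labels have type 'i,
  output labels type 'o (both finite: the LCL finiteness condition; the degree
  bound is automatic on paths).  An input labeling is a map nat => 'i, an output
  labeling a map nat => 'o (values outside {0..<n} are irrelevant).

  The radius-r view of node v is the labelled radius-r neighbourhood of v,
  written as a function of the offset d (with |d| <= r) from v; None means that
  there is no node at offset d.  A verifier of radius r is a predicate on views
  that only reads offsets |d| <= r and is invariant under reflecting the path
  (the only nontrivial isomorphism of rooted paths), i.e. it depends only on the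
  radius-r neighbourhood up to isomorphism.
\<close>

definition view ::
  "nat \<Rightarrow> nat \<Rightarrow> (nat \<Rightarrow> 'i) \<Rightarrow> (nat \<Rightarrow> 'o) \<Rightarrow> nat \<Rightarrow> int \<Rightarrow> ('i \<times> 'o) option" where
  "view r n inp lab v = (\<lambda>d. if \<bar>d\<bar> \<le> int r \<and> 0 \<le> int v + d \<and> int v + d < int n
      then Some (inp (nat (int v + d)), lab (nat (int v + d))) else None)"

definition path_verifier :: "nat \<Rightarrow> ((int \<Rightarrow> ('i \<times> 'o) option) \<Rightarrow> bool) \<Rightarrow> bool" where
  "path_verifier r \<psi> \<longleftrightarrow>
     (\<forall>V W. (\<forall>d. \<bar>d\<bar> \<le> int r \<longrightarrow> V d = W d) \<longrightarrow> \<psi> V = \<psi> W) \<and>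
     (\<forall>V. \<psi> (\<lambda>d. V (- d)) = \<psi> V)"

definition accepts ::
  "nat \<Rightarrow> ((int \<Rightarrow> ('i \<times> 'o) option) \<Rightarrow> bool) \<Rightarrow> nat \<Rightarrow> (nat \<Rightarrow> 'i) \<Rightarrow> (nat \<Rightarrow> 'o) \<Rightarrow> bool" where
  "accepts r \<psi> n inp lab \<longleftrightarrow> (\<forall>v<n. \<psi> (view r n inp lab v))"

definition pdist :: "nat \<Rightarrow> nat \<Rightarrow> nat" where
  "pdist u v = (if u \<le> v then v - u else u - v)"

text \<open>Relaxed verifier psi* on partial labelings (None = bottom).\<close>
definition relaxed_happy ::
  "nat \<Rightarrow> ((int \<Rightarrow> ('i \<times> 'o) option) \<Rightarrow> bool) \<Rightarrow> nat \<Rightarrow> (nat \<Rightarrow> 'i) \<Rightarrow> (nat \<Rightarrow> 'o option) \<Rightarrow> nat \<Rightarrow> bool" where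
  "relaxed_happy r \<psi> n inp plab v \<longleftrightarrow>
     (\<exists>u<n. pdist u v \<le> r \<and> plab u = None) \<or> \<psi> (view r n inp (\<lambda>u. the (plab u)) v)"

definition relaxed_accepts ::
  "nat \<Rightarrow> ((int \<Rightarrow> ('i \<times> 'o) option) \<Rightarrow> bool) \<Rightarrow> nat \<Rightarrow> (nat \<Rightarrow> 'i) \<Rightarrow> (nat \<Rightarrow> 'o option) \<Rightarrow> bool" where
  "relaxed_accepts r \<psi> n inp plab \<longleftrightarrow> (\<forall>v<n. relaxed_happy r \<psi> n inp plab v)"

definition is_mend ::
  "nat \<Rightarrow> ((int \<Rightarrow> ('i \<times> 'o) option) \<Rightarrow> bool) \<Rightarrow> nat \<Rightarrow> (nat \<Rightarrow> 'i) \<Rightarrow> (nat \<Rightarrow> 'o option)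
    \<Rightarrow> nat \<Rightarrow> real \<Rightarrow> (nat \<Rightarrow> 'o option) \<Rightarrow> bool" where
  "is_mend r \<psi> n inp plab v t mu \<longleftrightarrow>
     relaxed_accepts r \<psi> n inp mu \<and> mu v \<noteq> None \<and>
     (\<forall>u<n. mu u = None \<longrightarrow> plab u = None) \<and>
     (\<forall>u<n. mu u \<noteq> plab u \<longrightarrow> real (pdist u v) \<le> t)"

definition verifier_mendable ::
  "nat \<Rightarrow> ((int \<Rightarrow> ('i \<times> 'o) option) \<Rightarrow> bool) \<Rightarrow> (nat \<Rightarrow> real) \<Rightarrow> bool" where
  "verifier_mendable r \<psi> T \<longleftrightarrow>
     (\<forall>n inp plab v. relaxed_accepts r \<psi> n inp plab \<longrightarrow> v < n \<longrightarrow>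
        (\<exists>mu. is_mend r \<psi> n inp plab v (T n) mu))"

definition lcl_mendable ::
  "nat \<Rightarrow> ((int \<Rightarrow> ('i::finite \<times> 'o::finite) option) \<Rightarrow> bool) \<Rightarrow> (nat \<Rightarrow> real) \<Rightarrow> bool" where
  "lcl_mendable r \<psi> T \<longleftrightarrow>
     (\<exists>\<psi>'. path_verifier r \<psi>' \<and>
        (\<forall>n inp lab. accepts r \<psi>' n inp lab \<longleftrightarrow> accepts r \<psi> n inp lab) \<and>
        verifier_mendable r \<psi>' T)"

end

theory Submission
  imports Defs
begin

lemma int_pdist: "int (pdist u v) = \<bar>int u - int v\<bar>"
  unfolding pdist_def by auto

lemma transfer_happy:
  assumes rng: "\<And>d. \<bar>d\<bar> \<le> int r \<Longrightarrow> ((0 \<le> int w + d \<and> int w + d < int n) \<longleftrightarrow> (0 \<le> int w' + d \<and> int w' + d < int n'))"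
    and lbl: "\<And>d. \<bar>d\<bar> \<le> int r \<Longrightarrow> 0 \<le> int w + d \<Longrightarrow> int w + d < int n \<Longrightarrow>
         inp (nat (int w + d)) = inp' (nat (int w' + d)) \<and> lab (nat (int w + d)) = lab' (nat (int w' + d))"
    and h: "relaxed_happy r \<psi> n inp lab w"
  shows "relaxed_happy r \<psi> n' inp' lab' w'"
proof (cases "\<exists>u<n. pdist u w \<le> r \<and> lab u = None")
  case True
  then obtain u where u: "u < n" "pdist u w \<le> r" "lab u = None" by blast
  define d where "d = int u - int w"
  have d: "\<bar>d\<bar> \<le> int r" using u(2) int_pdist[of u w] d_def by linarith
  have r1: "0 \<le> int w + d \<and> int w + d < int n" using u(1) d_def by simp
  hence r2: "0 \<le> int w' + d \<and> int w' + d < int n'" using rng[OF d] by blast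
  have "lab' (nat (int w' + d)) = None" using lbl[OF d] r1 u(3) d_def by simp
  moreover have "nat (int w' + d) < n'" using r2 by linarith
  moreover have "pdist (nat (int w' + d)) w' \<le> r"
    using int_pdist[of "nat (int w' + d)" w'] d r2 by linarith
  ultimately show ?thesis unfolding relaxed_happy_def by blast
next
  case False
  hence p: "\<psi> (view r n inp (\<lambda>u. the (lab u)) w)" using h unfolding relaxed_happy_def by blast
  have "view r n inp (\<lambda>u. the (lab u)) w = view r n' inp' (\<lambda>u. the (lab' u)) w'"
  proof
    fix d
    show "view r n inp (\<lambda>u. the (lab u)) w d = view r n' inp' (\<lambda>u. the (lab' u)) w' d"
      unfolding view_def using rng[of d] lbl[of d] by auto
  qed
  thus ?thesis using p unfolding relaxed_happy_def by simp
qed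

lemma large_case:
  fixes plab :: "nat \<Rightarrow> 'o option" and inp :: "nat \<Rightarrow> 'i"
  assumes vm: "verifier_mendable r \<psi> T"
    and cond: "\<bar>T n0\<bar> + 2 * real r + 2 \<le> real (n0 div 2)"
    and acc: "relaxed_accepts r \<psi> n inp plab" and vn: "v < n" and nn: "n0 \<le> n"
  shows "\<exists>mu. is_mend r \<psi> n inp plab v (real n0) mu"
proof -
  define M where "M = n0 div 2"
  have "2 \<le> real M" using cond abs_ge_zero[of "T n0"] unfolding M_def by linarith
  hence M2: "2 \<le> M" by simp
  have Mn: "2 * M \<le> n0" unfolding M_def by simp
  define s where "s = min (v - M) (n - n0)"
  have F1: "s + n0 \<le> n" "s \<le> v" "v < s + n0" using nn vn Mn M2 unfolding s_def min_def by (auto split: if_splits)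
  have F2: "0 < s \<Longrightarrow> int v - int s \<ge> int M" unfolding s_def min_def using nn vn by (auto split: if_splits)
  have F3: "s + n0 < n \<Longrightarrow> int s + int n0 - 1 - int v \<ge> int M - 1"
    unfolding s_def min_def using nn vn Mn M2 by (auto split: if_splits)
  define inp' where "inp' = (\<lambda>i. inp (s + i))"
  define plab' where "plab' = (\<lambda>i. if (i = 0 \<and> 0 < s) \<or> (i = n0 - 1 \<and> s + n0 < n) then None else plab (s + i))"
  define v' where "v' = v - s"
  have pb: "plab' k = plab (s + k)" if "\<not> (k = 0 \<and> 0 < s)" "\<not> (k = n0 - 1 \<and> s + n0 < n)" for k
    unfolding plab'_def using that by auto
  have n0pos: "0 < n0" using Mn M2 by simp
  have acc': "relaxed_accepts r \<psi> n0 inp' plab'"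
    unfolding relaxed_accepts_def
  proof (intro allI impI)
    fix i assume i: "i < n0"
    show "relaxed_happy r \<psi> n0 inp' plab' i"
    proof (cases "(0 < s \<and> i \<le> r) \<or> (s + n0 < n \<and> n0 - 1 - i \<le> r)")
      case True
      then show ?thesis
      proof
        assume a: "0 < s \<and> i \<le> r"
        have "0 < n0 \<and> pdist 0 i \<le> r \<and> plab' 0 = None" using a n0pos unfolding pdist_def plab'_def by auto
        thus ?thesis unfolding relaxed_happy_def by blast
      next
        assume a: "s + n0 < n \<and> n0 - 1 - i \<le> r"
        have "n0 - 1 < n0 \<and> pdist (n0 - 1) i \<le> r \<and> plab' (n0 - 1) = None" using a n0pos i unfolding pdist_def plab'_def by auto
        thus ?thesis unfolding relaxed_happy_def by blast
      qed
    next
      case False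
      have h: "relaxed_happy r \<psi> n inp plab (s + i)" using acc F1 i unfolding relaxed_accepts_def by auto
      have L: "s = 0 \<or> int i > int r" using False by auto
      have R: "s + n0 = n \<or> int n0 - 1 - int i > int r" using False F1 i by auto
      show ?thesis
      proof (rule transfer_happy[OF _ _ h])
        fix d :: int assume d: "\<bar>d\<bar> \<le> int r"
        have d1: "- int r \<le> d" "d \<le> int r" using d by linarith+
        show "(0 \<le> int (s + i) + d \<and> int (s + i) + d < int n) = (0 \<le> int i + d \<and> int i + d < int n0)"
          using L R d1 F1(1) i by auto
      next
        fix d :: int assume d: "\<bar>d\<bar> \<le> int r" and r1: "0 \<le> int (s + i) + d" "int (s + i) + d < int n"
        have d1: "- int r \<le> d" "d \<le> int r" using d by linarith+
        have r2: "0 \<le> int i + d" "int i + d < int n0" using L R d1 F1(1) i r1 by auto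
        have e: "nat (int (s + i) + d) = s + nat (int i + d)" using r2 by auto
        have nb1: "\<not> (nat (int i + d) = 0 \<and> 0 < s)" using L d1 r2 by auto
        have nb2: "\<not> (nat (int i + d) = n0 - 1 \<and> s + n0 < n)" using R d1 r2 by auto
        show "inp (nat (int (s + i) + d)) = inp' (nat (int i + d)) \<and> plab (nat (int (s + i) + d)) = plab' (nat (int i + d))"
          unfolding inp'_def e using pb[OF nb1 nb2] by simp
      qed
    qed
  qed
  have v'n: "v' < n0" using F1 unfolding v'_def by simp
  obtain mu' where mu': "is_mend r \<psi> n0 inp' plab' v' (T n0) mu'"
    using vm acc' v'n unfolding verifier_mendable_def by blast
  have macc: "relaxed_accepts r \<psi> n0 inp' mu'" and mv: "mu' v' \<noteq> None"
    and mnone: "\<And>u. u < n0 \<Longrightarrow> mu' u = None \<Longrightarrow> plab' u = None"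
    and mch: "\<And>u. u < n0 \<Longrightarrow> mu' u \<noteq> plab' u \<Longrightarrow> real (pdist u v') \<le> T n0"
    using mu' unfolding is_mend_def by auto
  define ch where "ch = (\<lambda>u. s \<le> u \<and> u < s + n0 \<and> mu' (u - s) \<noteq> plab' (u - s))"
  define mu where "mu = (\<lambda>u. if ch u then mu' (u - s) else plab u)"
  have CH: "\<bar>int u - int v\<bar> + 2 * int r + 2 \<le> int M" if "ch u" for u
  proof -
    have a: "s \<le> u" "u - s < n0" "mu' (u - s) \<noteq> plab' (u - s)" using that unfolding ch_def by auto
    have "real (pdist (u - s) v') \<le> \<bar>T n0\<bar>" using mch[OF a(2,3)] by linarith
    moreover have "int (pdist (u - s) v') = \<bar>int u - int v\<bar>"
      unfolding int_pdist v'_def using a(1) F1(2) by simp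
    hence "real_of_int \<bar>int u - int v\<bar> = real (pdist (u - s) v')"
      by (metis of_int_of_nat_eq)
    ultimately have "real_of_int \<bar>int u - int v\<bar> + 2 * real r + 2 \<le> real M"
      using cond unfolding M_def by linarith
    thus ?thesis by linarith
  qed
  have W: "s \<le> u \<and> u < s + n0 \<and> plab' (u - s) = plab u"
    if "u < n" "\<bar>int u - int v\<bar> + 2 \<le> int M" for u
  proof -
    have u1: "s \<le> u" using F2 that by (cases "s = 0") auto
    have u2: "0 < s \<Longrightarrow> s + 2 \<le> u" using F2 that by auto
    have u3: "s + n0 < n \<Longrightarrow> u + 2 \<le> s + n0" using F3 that by auto
    have u4: "u < s + n0" using u3 that F1 by (cases "s + n0 < n") auto
    have "plab' (u - s) = plab (s + (u - s))"
    proof (rule pb)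
      show "\<not> (u - s = 0 \<and> 0 < s)" using u2 by linarith
      show "\<not> (u - s = n0 - 1 \<and> s + n0 < n)" using u3 u1 by auto
    qed
    thus ?thesis using u1 u4 by simp
  qed
  have notch: "mu' (u - s) = plab' (u - s)" if "\<not> ch u" "s \<le> u" "u < s + n0" for u
    using that unfolding ch_def by auto
  have part_a: "relaxed_accepts r \<psi> n inp mu"
    unfolding relaxed_accepts_def
  proof (intro allI impI)
    fix w assume w: "w < n"
    show "relaxed_happy r \<psi> n inp mu w"
    proof (cases "\<exists>u<n. pdist u w \<le> r \<and> ch u")
      case True
      then obtain u where u: "u < n" "pdist u w \<le> r" "ch u" by blast
      have uw: "\<bar>int u - int w\<bar> \<le> int r" using u(2) int_pdist[of u w] by linarith
      have wv: "\<bar>int w - int v\<bar> + int r + 2 \<le> int M" using CH[OF u(3)] uw by linarith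
      have Ww: "s \<le> w" "w < s + n0" using W[OF w] wv by auto
      have h: "relaxed_happy r \<psi> n0 inp' mu' (w - s)" using macc Ww unfolding relaxed_accepts_def by auto
      show ?thesis
      proof (rule transfer_happy[OF _ _ h])
        fix d :: int assume d: "\<bar>d\<bar> \<le> int r"
        show "(0 \<le> int (w - s) + d \<and> int (w - s) + d < int n0) = (0 \<le> int w + d \<and> int w + d < int n)"
        proof
          assume "0 \<le> int (w - s) + d \<and> int (w - s) + d < int n0"
          thus "0 \<le> int w + d \<and> int w + d < int n" using Ww F1 by auto
        next
          assume a: "0 \<le> int w + d \<and> int w + d < int n"
          have "\<bar>int (nat (int w + d)) - int v\<bar> + 2 \<le> int M" using a wv d by auto
          hence "s \<le> nat (int w + d) \<and> nat (int w + d) < s + n0" using W[of "nat (int w + d)"] a by auto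
          thus "0 \<le> int (w - s) + d \<and> int (w - s) + d < int n0" using Ww a by auto
        qed
      next
        fix d :: int assume d: "\<bar>d\<bar> \<le> int r" and r1: "0 \<le> int (w - s) + d" "int (w - s) + d < int n0"
        define u where "u = nat (int w + d)"
        have e: "nat (int (w - s) + d) = u - s" "s \<le> u" using r1 Ww unfolding u_def by auto
        have un: "u < n" using r1 Ww F1 unfolding u_def by auto
        have "\<bar>int u - int v\<bar> + 2 \<le> int M" using r1 wv d Ww unfolding u_def by auto
        hence Wu: "s \<le> u \<and> u < s + n0 \<and> plab' (u - s) = plab u" using W un by blast
        have "mu' (u - s) = mu u"
          using notch[of u] Wu unfolding mu_def by auto
        moreover have "inp' (u - s) = inp u" unfolding inp'_def using e by simp
        ultimately show "inp' (nat (int (w - s) + d)) = inp (nat (int w + d)) \<and> mu' (nat (int (w - s) + d)) = mu (nat (int w + d))"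
          unfolding e u_def[symmetric] by simp
      qed
    next
      case False
      have h: "relaxed_happy r \<psi> n inp plab w" using acc w unfolding relaxed_accepts_def by auto
      show ?thesis
      proof (rule transfer_happy[OF _ _ h])
        fix d :: int assume "\<bar>d\<bar> \<le> int r"
        show "(0 \<le> int w + d \<and> int w + d < int n) = (0 \<le> int w + d \<and> int w + d < int n)" by simp
      next
        fix d :: int assume d: "\<bar>d\<bar> \<le> int r" and r1: "0 \<le> int w + d" "int w + d < int n"
        have "pdist (nat (int w + d)) w \<le> r" using int_pdist[of "nat (int w + d)" w] d r1 by linarith
        moreover have "nat (int w + d) < n" using r1 by linarith
        ultimately have "\<not> ch (nat (int w + d))" using False by blast
        thus "inp (nat (int w + d)) = inp (nat (int w + d)) \<and> plab (nat (int w + d)) = mu (nat (int w + d))"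
          unfolding mu_def by simp
      qed
    qed
  qed
  have Wv: "s \<le> v \<and> v < s + n0 \<and> plab' (v - s) = plab v" using W[OF vn] M2 by auto
  have part_b: "mu v \<noteq> None"
  proof (cases "ch v")
    case True thus ?thesis using mv unfolding mu_def v'_def by simp
  next
    case False
    hence "mu' v' = plab' v'" using notch Wv unfolding v'_def by blast
    thus ?thesis using False mv Wv unfolding mu_def v'_def by simp
  qed
  have part_c: "plab u = None" if "u < n" "mu u = None" for u
  proof (cases "ch u")
    case True
    have "\<bar>int u - int v\<bar> + 2 \<le> int M" using CH[OF True] by linarith
    hence Wu: "s \<le> u \<and> u < s + n0 \<and> plab' (u - s) = plab u" using W that(1) by blast
    have "mu' (u - s) = None" using that(2) True unfolding mu_def by simp
    hence "plab' (u - s) = None" using mnone Wu by auto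
    thus ?thesis using Wu by simp
  next
    case False thus ?thesis using that unfolding mu_def by simp
  qed
  have part_d: "real (pdist u v) \<le> real n0" if "u < n" "mu u \<noteq> plab u" for u
  proof -
    have "ch u" using that unfolding mu_def by (auto split: if_splits)
    hence "\<bar>int u - int v\<bar> \<le> int n0" using CH Mn by fastforce
    hence "int (pdist u v) \<le> int n0" using int_pdist by simp
    thus ?thesis by simp
  qed
  show ?thesis unfolding is_mend_def using part_a part_b part_c part_d by blast
qed


lemma pdist_lt: "u < n \<Longrightarrow> v < n \<Longrightarrow> pdist u v < n"
  unfolding pdist_def by auto

theorem corollary8p3:
  fixes \<psi> :: "(int \<Rightarrow> ('i::finite \<times> 'o::finite) option) \<Rightarrow> bool"
    and r :: nat and T :: "nat \<Rightarrow> real"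
  assumes "path_verifier r \<psi>"
    and "T \<in> o(\<lambda>n. real n)"
    and "lcl_mendable r \<psi> T"
  shows "\<exists>c::real. lcl_mendable r \<psi> (\<lambda>_. c)"
proof -
  obtain \<psi>' where pv: "path_verifier r \<psi>'"
    and eq: "\<forall>n inp lab. accepts r \<psi>' n inp lab \<longleftrightarrow> accepts r \<psi> n inp lab"
    and vm: "verifier_mendable r \<psi>' T"
    using assms(3) unfolding lcl_mendable_def by blast
  have "eventually (\<lambda>x. norm (T x) \<le> (1/8) * norm (real x)) at_top"
    using landau_o.smallD[OF assms(2), of "1/8"] by simp
  then obtain N where N: "\<And>x. x \<ge> N \<Longrightarrow> norm (T x) \<le> (1/8) * norm (real x)"
    unfolding eventually_at_top_linorder by blast
  define n0 where "n0 = max N (16 * r + 40)"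
  have b: "\<bar>T n0\<bar> \<le> (1/8) * real n0" using N[of n0] unfolding n0_def by simp
  have c1: "n0 \<le> 2 * (n0 div 2) + 1" by simp
  hence c2: "real n0 \<le> 2 * real (n0 div 2) + 1" by linarith
  have c3: "real n0 \<ge> 16 * real r + 40" unfolding n0_def by simp
  have cond: "\<bar>T n0\<bar> + 2 * real r + 2 \<le> real (n0 div 2)" using b c2 c3 by linarith
  have "verifier_mendable r \<psi>' (\<lambda>_. real n0)"
    unfolding verifier_mendable_def
  proof (intro allI impI)
    fix n inp and plab :: "nat \<Rightarrow> 'o option" and v
    assume acc: "relaxed_accepts r \<psi>' n inp plab" and vn: "v < n"
    show "\<exists>mu. is_mend r \<psi>' n inp plab v (real n0) mu"
    proof (cases "n0 \<le> n")
      case True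
      show ?thesis by (rule large_case[OF vm cond acc vn True])
    next
      case False
      obtain mu where mu: "is_mend r \<psi>' n inp plab v (T n) mu"
        using vm acc vn unfolding verifier_mendable_def by blast
      have "is_mend r \<psi>' n inp plab v (real n0) mu"
        using mu pdist_lt[OF _ vn] False unfolding is_mend_def
        by (metis less_imp_le_nat not_le of_nat_le_iff order.strict_trans)
      thus ?thesis by blast
    qed
  qed
  hence "lcl_mendable r \<psi> (\<lambda>_. real n0)"
    unfolding lcl_mendable_def using pv eq by blast
  thus ?thesis by blast
qed

end
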